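(* Let $\mathcal{C}$ be a near MDS (NMDS) linear code over $\mathbb{F}_q$ with parameters $[n,k,n-k]$. If $\min\{k,n-k\}\ge 3$ and the supports of the minimum-weight codewords of $\mathcal{C}$ form a $2$-design (i.e. $(\mathcal{P}(\mathcal{C}),\mathcal{H}_{n-k}(\mathcal{C}))$ is a $2$-design), then $(\mathcal{P}(\mathcal{C}),\mathcal{H}_w(\mathcal{C}))$ and $(\mathcal{P}(\mathcal{C}^\perp),\mathcal{H}_w(\mathcal{C}^\perp))$ are $2$-designs for every $w$ with $2\le w\le n$.
   Context: An $[n,k,d]$ linear code is a $k$-dimensional subspace of $\mathbb{F}_q^n$ with minimum Hamming distance $d$; $\mathcal{C}^\perp$ is its dual with respect to the standard inner product. A code is AMDS (almost MDS) if it has parameters $[n,k,n-k]$, and NMDS if both $\mathcal{C}$ and $\mathcal{C}^\perp$ are AMDS (so $\mathcal{C}^\perp$ has parameters $[n,n-k,k]$). For a code $\mathcal{C}$ of length $n$, $\mathcal{P}(\mathcal{C})=\{1,\dots,n\}$ is the set of coordinate positions, and $\mathcal{H}_w(\mathcal{C})$ is the multiset $\{\{\operatorname{supp}(\mathbf c):\mathbf c\in\mathcal{C},\ \operatorname{wt}(\mathbf c)=w\}\}$ with every multiplicity divided by $q-1$. A $t$-$(n,w,\lambda)$ design is a pair (point set of size $n$, multiset of $w$-subsets called blocks) such that every $t$-subset of points lies in exactly $\lambda$ blocks; an empty block family counts as a (trivial) design. *)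

theory Defs
  imports "HOL-Analysis.Analysis" "HOL-Library.Multiset"
begin

(* Vectors of F_q^n are modelled as 'a ^ 'n with 'a a finite field and 'n a finite
   index type of coordinate positions; n = CARD('n). *)

definition linear_code :: "('a::{field,finite} ^ 'n) set \<Rightarrow> bool" where
  "linear_code C \<longleftrightarrow> vec.subspace C"

definition supp :: "'a::zero ^ 'n \<Rightarrow> 'n set" where
  "supp x = {i. x $ i \<noteq> 0}"

definition hwt :: "'a::zero ^ 'n \<Rightarrow> nat" where
  "hwt x = card (supp x)"

(* minimum Hamming distance = minimum weight of a nonzero codeword *)
definition min_dist :: "('a::zero ^ 'n) set \<Rightarrow> nat" where
  "min_dist C = Min (hwt ` (C - {0}))"

definition std_inner :: "'a::comm_semiring_0 ^ 'n \<Rightarrow> 'a ^ 'n \<Rightarrow> 'a" where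
  "std_inner x y = (\<Sum>i\<in>UNIV. x $ i * y $ i)"

definition dual_code :: "('a::{field,finite} ^ 'n) set \<Rightarrow> ('a ^ 'n) set" where
  "dual_code C = {x. \<forall>c\<in>C. std_inner x c = 0}"

definition has_params :: "('a::{field,finite} ^ 'n::finite) set \<Rightarrow> nat \<Rightarrow> nat \<Rightarrow> nat \<Rightarrow> bool" where
  "has_params C n k d \<longleftrightarrow> linear_code C \<and> CARD('n) = n \<and> vec.dim C = k \<and> min_dist C = d"

definition AMDS :: "('a::{field,finite} ^ 'n::finite) set \<Rightarrow> bool" where
  "AMDS C \<longleftrightarrow> linear_code C \<and> min_dist C = CARD('n) - vec.dim C"

definition NMDS :: "('a::{field,finite} ^ 'n::finite) set \<Rightarrow> bool" where
  "NMDS C \<longleftrightarrow> AMDS C \<and> AMDS (dual_code C)"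

definition positions :: "('a ^ 'n::finite) set \<Rightarrow> 'n set" where
  "positions C = UNIV"

definition H :: "('a::{field,finite} ^ 'n::finite) set \<Rightarrow> nat \<Rightarrow> 'n set multiset" where
  "H C w = (\<Sum>S\<in>supp ` {c\<in>C. hwt c = w}.
              replicate_mset (card {c\<in>C. hwt c = w \<and> supp c = S} div (CARD('a) - 1)) S)"

(* t-(v,w,lambda) design with point set P and block multiset B (empty B allowed) *)
definition is_t_design :: "nat \<Rightarrow> 'p set \<Rightarrow> 'p set multiset \<Rightarrow> bool" where
  "is_t_design t P B \<longleftrightarrow> finite P \<and>
     (\<exists>w. \<forall>b\<in>#B. b \<subseteq> P \<and> card b = w) \<and>
     (\<exists>lam. \<forall>T. T \<subseteq> P \<and> card T = t \<longrightarrow> size (filter_mset (\<lambda>b. T \<subseteq> b) B) = lam)"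

end

theory Submission
  imports Defs
begin

lemma card_subspace:
  fixes S :: "('a::{field,finite}^'n) set"
  assumes "vec.subspace S" shows "card S = CARD('a) ^ vec.dim S"
proof -
  obtain B where B: "B \<subseteq> S" "vec.independent B" "S \<subseteq> vec.span B" "card B = vec.dim S"
    by (rule vec.basis_exists)
  have fin: "finite B" using B(2) vec.finiteI_independent by blast
  have SB: "vec.span B = S" using B assms vec.span_subspace by blast
  let ?f = "\<lambda>u. \<Sum>v\<in>B. u v *s v"
  have bij: "bij_betw ?f (PiE B (\<lambda>_. UNIV::'a set)) (vec.span B)"
  proof (rule bij_betwI')
    fix u u' assume u: "u \<in> PiE B (\<lambda>_. UNIV::'a set)" and u': "u' \<in> PiE B (\<lambda>_. UNIV::'a set)"
    show "(?f u = ?f u') = (u = u')"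
    proof
      assume eq: "?f u = ?f u'"
      have "(\<Sum>v\<in>B. (u v - u' v) *s v) = 0"
        using eq by (simp add: vector_sub_rdistrib sum_subtractf)
      hence "\<forall>v\<in>B. u v - u' v = 0" using vec.independent_explicit[of B, THEN iffD1, OF B(2), THEN conjunct2, rule_format, of "\<lambda>v. u v - u' v"] by blast
      thus "u = u'" using u u' by (auto intro: PiE_ext)
    qed simp
  next
    fix u assume "u \<in> PiE B (\<lambda>_. UNIV::'a set)"
    thus "?f u \<in> vec.span B" using vec.span_finite[OF fin] by auto
  next
    fix y assume "y \<in> vec.span B"
    then obtain u where y: "y = ?f u" using vec.span_finite[OF fin] by auto
    show "\<exists>x\<in>PiE B (\<lambda>_. UNIV::'a set). y = ?f x"
      by (rule bexI[of _ "restrict u B"]) (auto simp: y)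
  qed
  have "card S = card (PiE B (\<lambda>_. (UNIV::'a set)))" using bij_betw_same_card[OF bij] SB by simp
  also have "\<dots> = CARD('a) ^ card B" by (simp add: card_PiE fin)
  finally show ?thesis using B(4) by simp
qed


lemma q_ge2: "CARD('a::{field,finite}) \<ge> 2"
proof -
  have "card {0::'a, 1} \<le> CARD('a)" by (rule card_mono) auto
  thus ?thesis by simp
qed

lemma card_kernel_functional:
  fixes G :: "('a::{field,finite}^'n) set" and f :: "'a^'n \<Rightarrow> 'a"
  assumes G: "vec.subspace G" and add: "\<forall>x\<in>G. \<forall>y\<in>G. f (x+y) = f x + f y"
    and sc: "\<forall>t. \<forall>x\<in>G. f (t *s x) = t * f x" and g0: "g0 \<in> G" "f g0 \<noteq> 0"
  shows "card G = CARD('a) * card {x\<in>G. f x = 0}"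
proof -
  define u0 where "u0 = (inverse (f g0)) *s g0"
  have u0G: "u0 \<in> G" using G g0 unfolding u0_def by (simp add: vec.subspace_scale)
  have fu0: "f u0 = 1" using sc g0 unfolding u0_def by simp
  let ?K = "{x\<in>G. f x = 0}"
  have "bij_betw (\<lambda>(t,h). t *s u0 + h) ((UNIV::'a set) \<times> ?K) G"
  proof (rule bij_betwI[where g = "\<lambda>g. (f g, g - f g *s u0)"])
    show "(\<lambda>(t,h). t *s u0 + h) \<in> (UNIV::'a set) \<times> ?K \<rightarrow> G"
    proof
      fix p assume "p \<in> (UNIV::'a set) \<times> ?K"
      then obtain t :: 'a and h where p: "p = (t,h)" "h \<in> G" by auto
      have "t *s u0 \<in> G" using G u0G by (rule vec.subspace_scale)
      hence "t *s u0 + h \<in> G" using G p(2) by (simp add: vec.subspace_add)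
      thus "(\<lambda>(t,h). t *s u0 + h) p \<in> G" using p by simp
    qed
    show "(\<lambda>g. (f g, g - f g *s u0)) \<in> G \<rightarrow> (UNIV::'a set) \<times> ?K"
    proof
      fix g assume g: "g \<in> G"
      have m: "(- f g) *s u0 \<in> G" using G u0G by (rule vec.subspace_scale)
      have e: "g - f g *s u0 = g + (- f g) *s u0" by (simp add: vec.scale_minus_left)
      have "f (g + (- f g) *s u0) = f g + f ((- f g) *s u0)" using add g m by blast
      also have "\<dots> = f g + (- f g) * f u0" using sc[rule_format, OF u0G, of "- f g"] by simp
      also have "\<dots> = 0" using fu0 by simp
      finally have "f (g + (- f g) *s u0) = 0" .
      moreover have "g + (- f g) *s u0 \<in> G" using vec.subspace_add[OF G g m] .
      ultimately have k: "g + (- f g) *s u0 \<in> ?K" by blast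
      have "(f g, g + (- f g) *s u0) \<in> (UNIV::'a set) \<times> ?K" using k by blast
      thus "(f g, g - f g *s u0) \<in> (UNIV::'a set) \<times> ?K" by (simp only: e)
    qed
    fix p assume "p \<in> (UNIV::'a set) \<times> ?K"
    then obtain t h where p: "p = (t,h)" "h \<in> G" "f h = 0" by auto
    have tu: "t *s u0 \<in> G" using G u0G by (rule vec.subspace_scale)
    have "f (t *s u0 + h) = f (t *s u0) + f h" using add tu p(2) by blast
    also have "\<dots> = t * f u0 + f h" using sc u0G by simp
    finally have "f (t *s u0 + h) = t" using fu0 p(3) by simp
    thus "(\<lambda>g. (f g, g - f g *s u0)) ((\<lambda>(t,h). t *s u0 + h) p) = p" using p by simp
  next
    fix g assume "g \<in> G" thus "(\<lambda>(t,h). t *s u0 + h) (f g, g - f g *s u0) = g" by simp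
  qed
  hence "card G = card ((UNIV::'a set) \<times> ?K)" by (simp add: bij_betw_same_card)
  thus ?thesis by (simp add: card_cartesian_product)
qed


lemma si_add1: "std_inner (x + y) c = std_inner x c + std_inner y (c::'a::comm_semiring_0^'n)"
  by (simp add: std_inner_def distrib_right sum.distrib)
lemma si_add2: "std_inner c (x + y) = std_inner c x + std_inner c (y::'a::comm_semiring_0^'n)"
  by (simp add: std_inner_def distrib_left sum.distrib)
lemma si_sc1: "std_inner (t *s x) c = t * std_inner x (c::'a::comm_ring_1^'n)"
  by (simp add: std_inner_def sum_distrib_left mult.assoc)
lemma si_sc2: "std_inner c (t *s x) = t * std_inner c (x::'a::comm_ring_1^'n)"
  by (simp add: std_inner_def sum_distrib_left algebra_simps)
lemma si_axis: "std_inner (axis i 1) c = c $ (i::'n::finite)" for c :: "'a::comm_ring_1^'n"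
proof -
  have "std_inner (axis i 1) c = (\<Sum>j\<in>UNIV. if j = i then c $ i else 0)"
    unfolding std_inner_def by (rule sum.cong) (auto simp: axis_def)
  thus ?thesis by simp
qed
lemma si_disj: assumes "supp x \<subseteq> V" "supp c \<subseteq> - V"
  shows "std_inner x c = (0::'a::{comm_semiring_0,semiring_no_zero_divisors})"
  unfolding std_inner_def
proof (rule sum.neutral, rule ballI)
  fix i show "x $ i * c $ i = 0" using assms by (cases "i \<in> V") (auto simp: supp_def)
qed

lemma subspace_E: "vec.subspace {x::'a::field^'n. supp x \<subseteq> V}"
  by (rule vec.subspaceI) (auto simp: supp_def subset_iff, metis add.right_neutral)

lemma subspace_dual: "vec.subspace (dual_code (C::('a::{field,finite}^'n) set))"
  by (rule vec.subspaceI) (auto simp: dual_code_def si_add1 si_sc1, simp add: std_inner_def)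

lemma card_E: "card {x::'a::{field,finite}^'n::finite. supp x \<subseteq> V} = CARD('a) ^ card V"
proof -
  have "bij_betw (\<lambda>x. restrict (\<lambda>i. x $ i) V) {x::'a^'n. supp x \<subseteq> V} (PiE V (\<lambda>_. UNIV::'a set))"
  proof (rule bij_betwI[where g = "\<lambda>f. \<chi> i. if i \<in> V then f i else 0"])
    show "(\<lambda>x. restrict (\<lambda>i. x $ i) V) \<in> {x::'a^'n. supp x \<subseteq> V} \<rightarrow> PiE V (\<lambda>_. UNIV::'a set)" by auto
    show "(\<lambda>f. \<chi> i. if i \<in> V then f i else 0) \<in> PiE V (\<lambda>_. UNIV::'a set) \<rightarrow> {x::'a^'n. supp x \<subseteq> V}"
      by (auto simp: supp_def)
    fix x :: "'a^'n" assume "x \<in> {x. supp x \<subseteq> V}"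
    thus "(\<chi> i. if i \<in> V then restrict (\<lambda>i. x $ i) V i else 0) = x"
      by (auto simp: supp_def vec_eq_iff)
  next
    fix f assume "f \<in> PiE V (\<lambda>_. UNIV::'a set)"
    thus "restrict (\<lambda>i. (\<chi> i. if i \<in> V then f i else 0) $ i) V = f"
      by (auto simp: PiE_def extensional_def restrict_def)
  qed
  hence "card {x::'a^'n. supp x \<subseteq> V} = card (PiE V (\<lambda>_. UNIV::'a set))" by (rule bij_betw_same_card)
  thus ?thesis by (simp add: card_PiE)
qed


lemma card_as_sum: "finite A \<Longrightarrow> card {x\<in>A. P x} = (\<Sum>x\<in>A. if P x then 1 else 0)"
  by (simp add: sum.If_cases Int_def)

lemma sum_if_split: "finite C \<Longrightarrow> K \<subseteq> C \<Longrightarrow>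
   (\<Sum>c\<in>C. if c \<in> K then a else b) = card K * a + card (C - K) * (b::nat)"
  by (simp add: sum.If_cases Int_absorb2 Int_absorb1 Diff_eq)

lemma dual_count:
  fixes C :: "('a::{field,finite}^'n::finite) set"
  assumes CS: "vec.subspace C"
  shows "card {x\<in>dual_code C. supp x \<subseteq> V} * card C = CARD('a) ^ card V * card {c\<in>C. supp c \<subseteq> - V}"
proof -
  define E where "E = {x::'a^'n. supp x \<subseteq> V}"
  define K where "K = {c\<in>C. supp c \<subseteq> - V}"
  define D where "D = {x\<in>E. \<forall>c\<in>C. std_inner x c = 0}"
  define q where "q = CARD('a)"
  have DD: "{x\<in>dual_code C. supp x \<subseteq> V} = D" by (auto simp: D_def E_def dual_code_def)
  have ES: "vec.subspace E" unfolding E_def by (rule subspace_E)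
  have finC: "finite C" and finE: "finite E" by auto
  have KC: "K \<subseteq> C" and DE: "D \<subseteq> E" by (auto simp: K_def D_def)
  have swap: "(\<Sum>c\<in>C. card {x\<in>E. std_inner x c = 0}) = (\<Sum>x\<in>E. card {c\<in>C. std_inner x c = 0})"
    by (simp add: card_as_sum finC finE sum.swap[of _ C])
  have h1: "q * card {x\<in>E. std_inner x c = 0} = (if c \<in> K then q * card E else card E)" if c: "c \<in> C" for c
  proof (cases "c \<in> K")
    case True
    hence "{x\<in>E. std_inner x c = 0} = E" using si_disj by (auto simp: E_def K_def)
    thus ?thesis using True by simp
  next
    case False
    then obtain i where i: "i \<in> V" "c $ i \<noteq> 0" using c by (auto simp: K_def supp_def)
    have "card E = q * card {x\<in>E. std_inner x c = 0}"
      unfolding q_def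
    proof (rule card_kernel_functional[OF ES, of _ "axis i 1"])
      show "\<forall>x\<in>E. \<forall>y\<in>E. std_inner (x + y) c = std_inner x c + std_inner y c" by (simp add: si_add1)
      show "\<forall>t. \<forall>x\<in>E. std_inner (t *s x) c = t * std_inner x c" by (simp add: si_sc1)
      show "axis i 1 \<in> E" using i by (auto simp: E_def supp_def axis_def)
      show "std_inner (axis i 1) c \<noteq> 0" using i by (simp add: si_axis)
    qed
    thus ?thesis using False by simp
  qed
  have h2: "q * card {c\<in>C. std_inner x c = 0} = (if x \<in> D then q * card C else card C)" if x: "x \<in> E" for x
  proof (cases "x \<in> D")
    case True
    hence "{c\<in>C. std_inner x c = 0} = C" by (auto simp: D_def)
    thus ?thesis using True by simp
  next
    case False
    then obtain c0 where c0: "c0 \<in> C" "std_inner x c0 \<noteq> 0" using x by (auto simp: D_def)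
    have "card C = q * card {c\<in>C. std_inner x c = 0}"
      unfolding q_def
    proof (rule card_kernel_functional[OF CS, of _ c0])
      show "\<forall>a\<in>C. \<forall>b\<in>C. std_inner x (a + b) = std_inner x a + std_inner x b" by (simp add: si_add2)
      show "\<forall>t. \<forall>a\<in>C. std_inner x (t *s a) = t * std_inner x a" by (simp add: si_sc2)
    qed (use c0 in auto)
    thus ?thesis using False by simp
  qed
  have "q * (\<Sum>c\<in>C. card {x\<in>E. std_inner x c = 0}) = (\<Sum>c\<in>C. if c \<in> K then q * card E else card E)"
    by (simp add: sum_distrib_left h1 cong: sum.cong)
  also have "\<dots> = card K * (q * card E) + card (C - K) * card E" by (rule sum_if_split[OF finC KC])
  finally have e1: "q * (\<Sum>c\<in>C. card {x\<in>E. std_inner x c = 0}) = card K * (q * card E) + card (C - K) * card E" .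
  have "q * (\<Sum>x\<in>E. card {c\<in>C. std_inner x c = 0}) = (\<Sum>x\<in>E. if x \<in> D then q * card C else card C)"
    by (simp add: sum_distrib_left h2 cong: sum.cong)
  also have "\<dots> = card D * (q * card C) + card (E - D) * card C" by (rule sum_if_split[OF finE DE])
  finally have e2: "q * (\<Sum>x\<in>E. card {c\<in>C. std_inner x c = 0}) = card D * (q * card C) + card (E - D) * card C" .
  have cC: "card C = card K + card (C - K)" using KC finC by (metis card_Diff_subset card_mono finite_subset le_add_diff_inverse)
  have cE: "card E = card D + card (E - D)" using DE finE by (metis card_Diff_subset card_mono finite_subset le_add_diff_inverse)
  have q2: "q \<ge> 2" unfolding q_def by (rule q_ge2)
  define a where "a = card K" define b where "b = card (C - K)"
  define c where "c = card D" define e where "e = card (E - D)"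
  have eq: "a * (q * (c + e)) + b * (c + e) = c * (q * (a + b)) + e * (a + b)"
    using e1 e2 swap cC cE unfolding a_def b_def c_def e_def by metis
  have "int a * (int q * (int c + int e)) + int b * (int c + int e) = int c * (int q * (int a + int b)) + int e * (int a + int b)"
    using arg_cong[OF eq, of int] by simp
  hence "(int q - 1) * (int a * int e - int c * int b) = 0" by (simp add: algebra_simps)
  hence "int a * int e = int c * int b" using q2 by simp
  hence "c * (a + b) = (c + e) * a" by (simp add: algebra_simps) (metis of_nat_eq_iff of_nat_mult mult.commute)
  thus ?thesis using DD cC cE unfolding a_def b_def c_def e_def K_def E_def q_def
    by (simp add: card_E[symmetric])
qed


lemma filter_rep: "filter_mset P (replicate_mset n x) = (if P x then replicate_mset n x else {#})"
  by (induction n) auto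

lemma size_filter_sum_rep: "finite A \<Longrightarrow>
  size (filter_mset P (\<Sum>x\<in>A. replicate_mset (f x) x)) = (\<Sum>x\<in>A. if P x then f x else 0)"
  by (induction A rule: finite_induct) (auto simp: filter_rep)

lemma mem_sum_rep: "finite A \<Longrightarrow> b \<in># (\<Sum>x\<in>A. replicate_mset (f x) x) \<Longrightarrow> b \<in> A"
  by (induction A rule: finite_induct) (auto split: if_splits)

lemma card_supersets:
  assumes "finite V" "A \<subseteq> V" "card A \<le> m"
  shows "card {W. W \<subseteq> V \<and> card W = m \<and> A \<subseteq> W} = (card V - card A) choose (m - card A)"
proof -
  have fA: "finite A" using assms finite_subset by blast
  have "bij_betw (\<lambda>W. W - A) {W. W \<subseteq> V \<and> card W = m \<and> A \<subseteq> W} {W. W \<subseteq> V - A \<and> card W = m - card A}"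
  proof (rule bij_betwI[where g = "\<lambda>W. W \<union> A"])
    show "(\<lambda>W. W - A) \<in> {W. W \<subseteq> V \<and> card W = m \<and> A \<subseteq> W} \<rightarrow> {W. W \<subseteq> V - A \<and> card W = m - card A}"
      using assms by (auto simp: card_Diff_subset finite_subset)
    show "(\<lambda>W. W \<union> A) \<in> {W. W \<subseteq> V - A \<and> card W = m - card A} \<rightarrow> {W. W \<subseteq> V \<and> card W = m \<and> A \<subseteq> W}"
    proof
      fix W assume W: "W \<in> {W. W \<subseteq> V - A \<and> card W = m - card A}"
      hence "finite W" using assms finite_subset by blast
      hence "card (W \<union> A) = card W + card A" using W fA by (subst card_Un_disjoint) auto
      thus "W \<union> A \<in> {W. W \<subseteq> V \<and> card W = m \<and> A \<subseteq> W}" using W assms by auto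
    qed
  qed auto
  hence "card {W. W \<subseteq> V \<and> card W = m \<and> A \<subseteq> W} = card {W. W \<subseteq> V - A \<and> card W = m - card A}"
    by (rule bij_betw_same_card)
  also have "\<dots> = card (V - A) choose (m - card A)" using assms by (simp add: n_subsets)
  finally show ?thesis using assms fA by (simp add: card_Diff_subset)
qed

lemma card_supersets0:
  assumes "finite V" "\<not> (A \<subseteq> V \<and> card A \<le> m)"
  shows "card {W. W \<subseteq> V \<and> card W = m \<and> A \<subseteq> W} = 0"
proof -
  have "{W. W \<subseteq> V \<and> card W = m \<and> A \<subseteq> W} = {}"
  proof (rule ccontr)
    assume "\<not> ?thesis"
    then obtain W where W: "W \<subseteq> V" "card W = m" "A \<subseteq> W" by auto
    hence "card A \<le> m" using assms(1) by (metis card_mono finite_subset)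
    thus False using W assms by auto
  qed
  thus ?thesis by (metis card.empty)
qed

definition AA :: "('a::zero^'n::finite) set \<Rightarrow> 'n set \<Rightarrow> nat \<Rightarrow> nat" where
  "AA X V w = card {c\<in>X. supp c \<subseteq> V \<and> hwt c = w}"

lemma tri:
  fixes X :: "('a::zero^'n::finite) set"
  assumes fX: "finite X"
  shows "(\<Sum>W\<in>{W. W \<subseteq> V \<and> card W = m}. card {c\<in>X. supp c \<subseteq> W})
       = (\<Sum>w\<le>m. AA X V w * ((card V - w) choose (m - w)))"
proof -
  have fV: "finite V" by simp
  have fF: "finite {W. W \<subseteq> V \<and> card W = m}" by simp
  have "(\<Sum>W\<in>{W. W \<subseteq> V \<and> card W = m}. card {c\<in>X. supp c \<subseteq> W})
      = (\<Sum>c\<in>X. card {W. W \<subseteq> V \<and> card W = m \<and> supp c \<subseteq> W})"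
  proof -
    have "(\<Sum>W\<in>{W. W \<subseteq> V \<and> card W = m}. card {c\<in>X. supp c \<subseteq> W})
       = (\<Sum>W\<in>{W. W \<subseteq> V \<and> card W = m}. \<Sum>c\<in>X. if supp c \<subseteq> W then 1 else 0)"
      using fX by (simp add: card_as_sum)
    also have "\<dots> = (\<Sum>c\<in>X. \<Sum>W\<in>{W. W \<subseteq> V \<and> card W = m}. if supp c \<subseteq> W then 1 else 0)"
      by (rule sum.swap)
    also have "\<dots> = (\<Sum>c\<in>X. card {W\<in>{W. W \<subseteq> V \<and> card W = m}. supp c \<subseteq> W})"
      using card_as_sum[OF fF] by presburger
    also have "\<dots> = (\<Sum>c\<in>X. card {W. W \<subseteq> V \<and> card W = m \<and> supp c \<subseteq> W})"
      by (intro sum.cong refl arg_cong[where f=card]) auto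
    finally show ?thesis .
  qed
  also have "\<dots> = (\<Sum>c\<in>X. if supp c \<subseteq> V \<and> hwt c \<le> m then (card V - hwt c) choose (m - hwt c) else 0)"
  proof (rule sum.cong[OF refl])
    fix c show "card {W. W \<subseteq> V \<and> card W = m \<and> supp c \<subseteq> W} =
      (if supp c \<subseteq> V \<and> hwt c \<le> m then (card V - hwt c) choose (m - hwt c) else 0)"
      using card_supersets[OF fV, of "supp c" m] card_supersets0[OF fV, of "supp c" m]
      by (auto simp: hwt_def)
  qed
  also have "\<dots> = (\<Sum>c\<in>X. \<Sum>w\<le>m. if supp c \<subseteq> V \<and> hwt c = w then (card V - w) choose (m - w) else 0)"
  proof (rule sum.cong[OF refl])
    fix c
    have "(\<Sum>w\<le>m. if supp c \<subseteq> V \<and> hwt c = w then (card V - w) choose (m - w) else 0)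
       = (\<Sum>w\<le>m. if hwt c = w then (if supp c \<subseteq> V then (card V - hwt c) choose (m - hwt c) else 0) else 0)"
      by (rule sum.cong) auto
    also have "\<dots> = (if supp c \<subseteq> V \<and> hwt c \<le> m then (card V - hwt c) choose (m - hwt c) else 0)"
      by (simp add: sum.delta)
    finally show "(if supp c \<subseteq> V \<and> hwt c \<le> m then (card V - hwt c) choose (m - hwt c) else 0) =
       (\<Sum>w\<le>m. if supp c \<subseteq> V \<and> hwt c = w then (card V - w) choose (m - w) else 0)" by simp
  qed
  also have "\<dots> = (\<Sum>w\<le>m. \<Sum>c\<in>X. if supp c \<subseteq> V \<and> hwt c = w then (card V - w) choose (m - w) else 0)"
    by (rule sum.swap)
  also have "\<dots> = (\<Sum>w\<le>m. AA X V w * ((card V - w) choose (m - w)))"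
  proof (rule sum.cong[OF refl])
    fix w
    have "(\<Sum>c\<in>X. if supp c \<subseteq> V \<and> hwt c = w then (card V - w) choose (m - w) else 0)
        = (\<Sum>c\<in>X. (if supp c \<subseteq> V \<and> hwt c = w then 1 else 0) * ((card V - w) choose (m - w)))"
      by (rule sum.cong) auto
    also have "\<dots> = AA X V w * ((card V - w) choose (m - w))"
      unfolding AA_def using fX by (simp add: card_as_sum sum_distrib_right)
    finally show "(\<Sum>c\<in>X. if supp c \<subseteq> V \<and> hwt c = w then (card V - w) choose (m - w) else 0)
        = AA X V w * ((card V - w) choose (m - w))" .
  qed
  finally show ?thesis .
qed

lemma tri_unique:
  fixes x y :: "nat \<Rightarrow> nat"
  assumes h: "\<And>m. m \<noteq> d \<Longrightarrow> (\<Sum>w\<le>m. x w * ((N - w) choose (m - w))) = (\<Sum>w\<le>m. y w * ((N - w) choose (m - w)))"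
    and hd: "x d = y d"
  shows "x w = y w"
proof (induction w rule: less_induct)
  case (less w)
  show ?case
  proof (cases "w = d")
    case True thus ?thesis using hd by simp
  next
    case False
    note e = h[OF False]
    show ?thesis
    proof (cases w)
      case 0 thus ?thesis using e by simp
    next
      case (Suc w')
      have "(\<Sum>w\<le>w'. x w * ((N - w) choose (Suc w' - w))) = (\<Sum>w\<le>w'. y w * ((N - w) choose (Suc w' - w)))"
        using less Suc by (intro sum.cong) auto
      thus ?thesis using e Suc by simp
    qed
  qed
qed

lemma ie2: "finite M \<Longrightarrow> card {c\<in>M. P c \<and> Q c} + card {c\<in>M. \<not> P c} + card {c\<in>M. \<not> Q c}
   = card M + card {c\<in>M. \<not> P c \<and> \<not> Q c}"
proof -
  assume fM: "finite M"
  have "card {c\<in>M. \<not> P c} + card {c\<in>M. \<not> Q c} = card ({c\<in>M. \<not> P c} \<union> {c\<in>M. \<not> Q c}) + card ({c\<in>M. \<not> P c} \<inter> {c\<in>M. \<not> Q c})"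
    using fM by (intro card_Un_Int) auto
  moreover have "{c\<in>M. \<not> P c} \<inter> {c\<in>M. \<not> Q c} = {c\<in>M. \<not> P c \<and> \<not> Q c}" by auto
  moreover have "card {c\<in>M. P c \<and> Q c} + card ({c\<in>M. \<not> P c} \<union> {c\<in>M. \<not> Q c}) = card M"
  proof -
    have "{c\<in>M. P c \<and> Q c} \<union> ({c\<in>M. \<not> P c} \<union> {c\<in>M. \<not> Q c}) = M" by auto
    moreover have "card ({c\<in>M. P c \<and> Q c} \<union> ({c\<in>M. \<not> P c} \<union> {c\<in>M. \<not> Q c})) = card {c\<in>M. P c \<and> Q c} + card ({c\<in>M. \<not> P c} \<union> {c\<in>M. \<not> Q c})"
      using fM by (intro card_Un_disjoint) auto
    ultimately show ?thesis by simp
  qed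
  ultimately show ?thesis by simp
qed

lemma ie1: "finite M \<Longrightarrow> card {c\<in>M. P c} + card {c\<in>M. \<not> P c} = card M"
proof -
  assume fM: "finite M"
  have "card ({c\<in>M. P c} \<union> {c\<in>M. \<not> P c}) = card {c\<in>M. P c} + card {c\<in>M. \<not> P c}"
    using fM by (intro card_Un_disjoint) auto
  moreover have "{c\<in>M. P c} \<union> {c\<in>M. \<not> P c} = M" by auto
  ultimately show ?thesis by simp
qed


lemma card_Compl': "card (- (A::'n::finite set)) = CARD('n) - card A"
  by (simp add: Compl_eq_Diff_UNIV card_Diff_subset)

lemma design_core:
  fixes X :: "('a::{field,finite}^'n::finite) set" and G :: "nat \<Rightarrow> nat"
  assumes gG: "\<And>W. card W \<noteq> d \<Longrightarrow> card {c\<in>X. supp c \<subseteq> W} = G (card W)"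
    and Ed: "\<And>S S'. card S = card S' \<Longrightarrow> card S \<le> 2 \<Longrightarrow>
        card {c\<in>X. hwt c = d \<and> supp c \<inter> S = {}} = card {c\<in>X. hwt c = d \<and> supp c \<inter> S' = {}}"
    and T: "card T = 2" "card T' = 2"
  shows "card {c\<in>X. hwt c = w \<and> T \<subseteq> supp c} = card {c\<in>X. hwt c = w \<and> T' \<subseteq> supp c}"
proof -
  have fX: "finite X" by simp
  have sumG: "(\<Sum>w\<le>m. AA X (-S) w * ((card (-S) - w) choose (m - w))) = (card (-S) choose m) * G m"
    if "m \<noteq> d" for S :: "'n set" and m
  proof -
    have "(\<Sum>w\<le>m. AA X (-S) w * ((card (-S) - w) choose (m - w)))
        = (\<Sum>W\<in>{W. W \<subseteq> -S \<and> card W = m}. card {c\<in>X. supp c \<subseteq> W})"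
      by (rule tri[OF fX, symmetric])
    also have "\<dots> = (\<Sum>W\<in>{W. W \<subseteq> -S \<and> card W = m}. G m)"
      using gG that by (intro sum.cong) auto
    also have "\<dots> = (card (-S) choose m) * G m" by (simp add: n_subsets)
    finally show ?thesis .
  qed
  have A_eq: "AA X (-S) w = AA X (-S') w" if S: "card S = card S'" "card S \<le> 2" for S S' :: "'n set" and w
  proof -
    have cc: "card (-S) = card (-S')" using S by (simp add: card_Compl')
    have dd: "AA X (-R) d = card {c\<in>X. hwt c = d \<and> supp c \<inter> R = {}}" for R :: "'n set"
      unfolding AA_def by (rule arg_cong[where f=card]) auto
    show ?thesis
    proof (rule tri_unique[where d = d and N = "card (-S)" and x = "AA X (-S)" and y = "AA X (-S')"])
      fix m assume "m \<noteq> d"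
      thus "(\<Sum>w\<le>m. AA X (-S) w * ((card (-S) - w) choose (m - w))) = (\<Sum>w\<le>m. AA X (-S') w * ((card (-S) - w) choose (m - w)))"
        using sumG[of m S] sumG[of m S'] cc by simp
    next
      show "AA X (-S) d = AA X (-S') d" using dd Ed[OF S] by simp
    qed
  qed
  have key: "card {c\<in>X. hwt c = w \<and> {x,y} \<subseteq> supp c} + AA X (-{x}) w + AA X (-{y}) w
     = card {c\<in>X. hwt c = w} + AA X (-{x,y}) w" for x y
  proof -
    let ?M = "{c\<in>X. hwt c = w}"
    have "card {c\<in>?M. x \<in> supp c \<and> y \<in> supp c} + card {c\<in>?M. x \<notin> supp c} + card {c\<in>?M. y \<notin> supp c}
      = card ?M + card {c\<in>?M. x \<notin> supp c \<and> y \<notin> supp c}" by (rule ie2) simp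
    moreover have "{c\<in>?M. x \<in> supp c \<and> y \<in> supp c} = {c\<in>X. hwt c = w \<and> {x,y} \<subseteq> supp c}" by auto
    moreover have "{c\<in>?M. x \<notin> supp c} = {c\<in>X. supp c \<subseteq> -{x} \<and> hwt c = w}" by auto
    moreover have "{c\<in>?M. y \<notin> supp c} = {c\<in>X. supp c \<subseteq> -{y} \<and> hwt c = w}" by auto
    moreover have "{c\<in>?M. x \<notin> supp c \<and> y \<notin> supp c} = {c\<in>X. supp c \<subseteq> -{x,y} \<and> hwt c = w}" by auto
    ultimately show ?thesis unfolding AA_def by simp
  qed
  obtain x y where xy: "T = {x,y}" "x \<noteq> y" using T(1) by (auto simp: card_2_iff)
  obtain x' y' where xy': "T' = {x',y'}" "x' \<noteq> y'" using T(2) by (auto simp: card_2_iff)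
  have "AA X (-{x}) w = AA X (-{x'}) w" by (rule A_eq) auto
  moreover have "AA X (-{y}) w = AA X (-{y'}) w" by (rule A_eq) auto
  moreover have "AA X (-{x,y}) w = AA X (-{x',y'}) w" by (rule A_eq) (use xy xy' in auto)
  ultimately show ?thesis using key[of x y] key[of x' y'] xy xy' by simp
qed


lemma card_by_supp:
  fixes X :: "('a::zero^'n::finite) set"
  assumes "finite X" "finite F"
  shows "card {c\<in>X. supp c \<in> F} = (\<Sum>W\<in>F. card {c\<in>X. supp c = W})"
proof -
  have "{c\<in>X. supp c \<in> F} = (\<Union>W\<in>F. {c\<in>X. supp c = W})" by auto
  moreover have "card (\<Union>W\<in>F. {c\<in>X. supp c = W}) = (\<Sum>W\<in>F. card {c\<in>X. supp c = W})"
    using assms by (intro card_UN_disjoint) auto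
  ultimately show ?thesis by simp
qed

lemma supp_scale: "t \<noteq> 0 \<Longrightarrow> supp (t *s (c::'a::field^'n)) = supp c"
  by (auto simp: supp_def)

lemma scal_dvd:
  fixes X :: "('a::{field,finite}^'n::finite) set"
  assumes XS: "vec.subspace X" and i: "i \<in> S"
  shows "(CARD('a) - 1) dvd card {c\<in>X. supp c = S}"
proof -
  let ?Y = "{c\<in>X. supp c = S \<and> c $ i = (1::'a)}"
  have "bij_betw (\<lambda>(t,c). t *s c) ((UNIV - {0}) \<times> ?Y) {c\<in>X. supp c = S}"
  proof (rule bij_betwI[where g = "\<lambda>c. (c $ i, inverse (c $ i) *s c)"])
    show "(\<lambda>(t,c). t *s c) \<in> (UNIV - {0}) \<times> ?Y \<rightarrow> {c\<in>X. supp c = S}"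
      using XS by (auto simp: supp_scale vec.subspace_scale)
    show "(\<lambda>c. (c $ i, inverse (c $ i) *s c)) \<in> {c\<in>X. supp c = S} \<rightarrow> (UNIV - {0}) \<times> ?Y"
    proof
      fix c assume c: "c \<in> {c\<in>X. supp c = S}"
      hence ci: "c $ i \<noteq> 0" using i by (auto simp: supp_def)
      thus "(c $ i, inverse (c $ i) *s c) \<in> (UNIV - {0}) \<times> ?Y"
        using c XS by (auto simp: supp_scale vec.subspace_scale)
    qed
    fix p assume "p \<in> (UNIV - {0::'a}) \<times> ?Y"
    then obtain t c where p: "p = (t,c)" "t \<noteq> 0" "c $ i = 1" by auto
    thus "(\<lambda>c. (c $ i, inverse (c $ i) *s c)) ((\<lambda>(t,c). t *s c) p) = p" by simp
  next
    fix c assume c: "c \<in> {c\<in>X. supp c = S}"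
    hence ci: "c $ i \<noteq> 0" using i by (auto simp: supp_def)
    thus "(\<lambda>(t,c). t *s c) (c $ i, inverse (c $ i) *s c) = c" by simp
  qed
  hence "card {c\<in>X. supp c = S} = card ((UNIV - {0::'a}) \<times> ?Y)" by (simp add: bij_betw_same_card)
  also have "\<dots> = (CARD('a) - 1) * card ?Y" by (simp add: card_cartesian_product card_Diff_subset)
  finally show ?thesis by simp
qed

lemma H_size:
  fixes X :: "('a::{field,finite}^'n::finite) set"
  assumes XS: "vec.subspace X" and w: "w > 0"
  shows "size (filter_mset (\<lambda>b. T \<subseteq> b) (H X w)) * (CARD('a) - 1) = card {c\<in>X. hwt c = w \<and> T \<subseteq> supp c}"
proof -
  let ?q = "CARD('a)"
  let ?Sup = "supp ` {c\<in>X. hwt c = w}"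
  let ?N = "\<lambda>S. card {c\<in>X. hwt c = w \<and> supp c = S}"
  have fS: "finite ?Sup" by simp
  have Ndvd: "?N S div (?q - 1) * (?q - 1) = ?N S" if S: "S \<in> ?Sup" for S
  proof -
    have cS: "card S = w" using S by (auto simp: hwt_def)
    then obtain i where i: "i \<in> S" using w by fastforce
    have "{c\<in>X. hwt c = w \<and> supp c = S} = {c\<in>X. supp c = S}" using cS by (auto simp: hwt_def)
    thus ?thesis using scal_dvd[OF XS i] by simp
  qed
  have "size (filter_mset (\<lambda>b. T \<subseteq> b) (H X w)) = (\<Sum>S\<in>?Sup. if T \<subseteq> S then ?N S div (?q - 1) else 0)"
    unfolding H_def by (rule size_filter_sum_rep[OF fS])
  hence "size (filter_mset (\<lambda>b. T \<subseteq> b) (H X w)) * (?q - 1) = (\<Sum>S\<in>?Sup. if T \<subseteq> S then ?N S div (?q - 1) * (?q - 1) else 0)"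
    by (simp only: sum_distrib_right) (intro sum.cong refl, simp)
  also have "\<dots> = (\<Sum>S\<in>?Sup. if T \<subseteq> S then ?N S else 0)"
    using Ndvd by (intro sum.cong) auto
  also have "\<dots> = (\<Sum>S\<in>{S\<in>?Sup. T \<subseteq> S}. ?N S)"
    using fS by (simp add: sum.If_cases Int_def)
  also have "\<dots> = (\<Sum>S\<in>{S\<in>?Sup. T \<subseteq> S}. card {c\<in>{c\<in>X. hwt c = w}. supp c = S})"
    by (intro sum.cong refl arg_cong[where f=card]) auto
  also have "\<dots> = card {c\<in>{c\<in>X. hwt c = w}. supp c \<in> {S\<in>?Sup. T \<subseteq> S}}"
    by (rule card_by_supp[symmetric]) auto
  also have "{c\<in>{c\<in>X. hwt c = w}. supp c \<in> {S\<in>?Sup. T \<subseteq> S}} = {c\<in>X. hwt c = w \<and> T \<subseteq> supp c}"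
    by auto
  finally show ?thesis .
qed

lemma H_blocks:
  fixes X :: "('a::{field,finite}^'n::finite) set"
  assumes "b \<in># H X w" shows "card b = w"
proof -
  have "b \<in> supp ` {c\<in>X. hwt c = w}"
    using assms unfolding H_def by (rule mem_sum_rep[rotated]) simp
  thus ?thesis by (auto simp: hwt_def)
qed


lemma design_from_counts:
  fixes X :: "('a::{field,finite}^'n::finite) set"
  assumes XS: "vec.subspace X" and w: "w > 0"
    and eq: "\<And>T T'. card T = 2 \<Longrightarrow> card T' = 2 \<Longrightarrow>
       card {c\<in>X. hwt c = w \<and> T \<subseteq> supp c} = card {c\<in>X. hwt c = w \<and> T' \<subseteq> supp c}"
  shows "is_t_design 2 (positions X) (H X w)"
  unfolding is_t_design_def positions_def
proof (intro conjI)
  show "finite (UNIV :: 'n set)" by simp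
  show "\<exists>w'. \<forall>b\<in>#H X w. b \<subseteq> UNIV \<and> card b = w'" using H_blocks by blast
  have q1: "CARD('a) - 1 > 0" using q_ge2[where 'a='a] by simp
  show "\<exists>lam. \<forall>T. T \<subseteq> UNIV \<and> card T = 2 \<longrightarrow> size (filter_mset (\<lambda>b. T \<subseteq> b) (H X w)) = lam"
  proof (cases "\<exists>T0::'n set. card T0 = 2")
    case True
    then obtain T0 :: "'n set" where T0: "card T0 = 2" by blast
    show ?thesis
    proof (intro exI allI impI)
      fix T :: "'n set" assume "T \<subseteq> UNIV \<and> card T = 2"
      hence "size (filter_mset (\<lambda>b. T \<subseteq> b) (H X w)) * (CARD('a) - 1) = size (filter_mset (\<lambda>b. T0 \<subseteq> b) (H X w)) * (CARD('a) - 1)"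
        using H_size[OF XS w] eq[of T T0] T0 by simp
      thus "size (filter_mset (\<lambda>b. T \<subseteq> b) (H X w)) = size (filter_mset (\<lambda>b. T0 \<subseteq> b) (H X w))"
        using q1 by simp
    qed
  next
    case False thus ?thesis by auto
  qed
qed

lemma min_dist_le:
  fixes X :: "('a::{field,finite}^'n::finite) set"
  assumes "c \<in> X" "c \<noteq> 0" shows "min_dist X \<le> hwt c"
  unfolding min_dist_def using assms by (intro Min_le) auto

lemma supp_empty_iff: "supp (c::'a::zero^'n) = {} \<longleftrightarrow> c = 0"
  by (auto simp: supp_def vec_eq_iff)

lemma g_small:
  fixes X :: "('a::{field,finite}^'n::finite) set"
  assumes XS: "vec.subspace X" and W: "card W < min_dist X"
  shows "card {c\<in>X. supp c \<subseteq> W} = 1"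
proof -
  have "{c\<in>X. supp c \<subseteq> W} = {0}"
  proof safe
    fix c assume c: "c \<in> X" "supp c \<subseteq> W"
    show "c = 0"
    proof (rule ccontr)
      assume "c \<noteq> 0"
      hence "min_dist X \<le> hwt c" using min_dist_le c by blast
      moreover have "hwt c \<le> card W" unfolding hwt_def using c by (simp add: card_mono)
      ultimately show False using W by simp
    qed
  next
    show "0 \<in> X" using XS by (simp add: vec.subspace_0)
  qed (auto simp: supp_def)
  thus ?thesis by simp
qed

lemma g_crit:
  fixes X :: "('a::{field,finite}^'n::finite) set"
  assumes XS: "vec.subspace X" and W: "card W = min_dist X" "min_dist X > 0"
  shows "card {c\<in>X. supp c \<subseteq> W} = 1 + card {c\<in>X. supp c = W}"
proof -
  have "{c\<in>X. supp c \<subseteq> W} \<subseteq> insert 0 {c\<in>X. supp c = W}"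
  proof
    fix c assume c: "c \<in> {c\<in>X. supp c \<subseteq> W}"
    show "c \<in> insert 0 {c\<in>X. supp c = W}"
    proof (cases "c = 0")
      case False
      hence "min_dist X \<le> card (supp c)" using min_dist_le c unfolding hwt_def by blast
      moreover have sW: "supp c \<subseteq> W" using c by simp
      moreover have "card (supp c) \<le> card W" using sW by (simp add: card_mono)
      ultimately have "card (supp c) = card W" using W(1) by linarith
      hence "supp c = W" using sW by (intro card_subset_eq) auto
      thus ?thesis using c by simp
    qed simp
  qed
  moreover have "insert 0 {c\<in>X. supp c = W} \<subseteq> {c\<in>X. supp c \<subseteq> W}"
    using XS by (auto simp: vec.subspace_0 supp_def)
  ultimately have eq: "{c\<in>X. supp c \<subseteq> W} = insert 0 {c\<in>X. supp c = W}" by blast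
  have "W \<noteq> {}" using W by auto
  hence "0 \<notin> {c\<in>X. supp c = W}" by (simp add: supp_def)
  thus ?thesis using eq by simp
qed

lemma double_count:
  fixes X :: "('a::{zero,finite}^'n::finite) set"
  shows "(\<Sum>y\<in>-{x}. card {c\<in>X. hwt c = d \<and> {x,y} \<subseteq> supp c}) = card {c\<in>X. hwt c = d \<and> {x} \<subseteq> supp c} * (d - 1)"
proof -
  let ?M = "{c\<in>X. hwt c = d \<and> {x} \<subseteq> supp c}"
  have fM: "finite ?M" by simp
  have "(\<Sum>y\<in>-{x}. card {c\<in>X. hwt c = d \<and> {x,y} \<subseteq> supp c}) = (\<Sum>y\<in>-{x}. card {c\<in>?M. y \<in> supp c})"
    by (intro sum.cong refl arg_cong[where f=card]) auto
  also have "\<dots> = (\<Sum>y\<in>-{x}. \<Sum>c\<in>?M. if y \<in> supp c then 1 else 0)"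
    using card_as_sum[OF fM] by presburger
  also have "\<dots> = (\<Sum>c\<in>?M. \<Sum>y\<in>-{x}. if y \<in> supp c then 1 else 0)" by (rule sum.swap)
  also have "\<dots> = (\<Sum>c\<in>?M. card {y\<in>-{x}. y \<in> supp c})"
    by (intro sum.cong refl card_as_sum[symmetric]) simp
  also have "\<dots> = (\<Sum>c\<in>?M. d - 1)"
  proof (intro sum.cong refl)
    fix c assume c: "c \<in> ?M"
    have "{y\<in>-{x}. y \<in> supp c} = supp c - {x}" by auto
    thus "card {y\<in>-{x}. y \<in> supp c} = d - 1" using c by (simp add: hwt_def)
  qed
  finally show ?thesis by simp
qed


lemma pow_cancel: "(q::nat) \<ge> 2 \<Longrightarrow> a \<le> k \<Longrightarrow> q ^ k = q ^ a * x \<Longrightarrow> x = q ^ (k - a)"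
proof -
  assume q: "q \<ge> 2" and a: "a \<le> k" and e: "q ^ k = q ^ a * x"
  have h: "q ^ k = q ^ a * q ^ (k - a)" using a by (simp add: power_add[symmetric])
  have "q ^ a * x = q ^ a * q ^ (k - a)" using trans[OF sym[OF e] h] .
  thus ?thesis using q by (metis mult_left_cancel power_not_zero not_numeral_le_zero)
qed

theorem mainTheorem1:
  fixes C :: "('a::{field,finite} ^ 'n::finite) set"
    and n k :: nat
  assumes "NMDS C"
    and "has_params C n k (n - k)"
    and "min k (n - k) \<ge> 3"
    and "is_t_design 2 (positions C) (H C (n - k))"
  shows "\<forall>w. 2 \<le> w \<and> w \<le> n \<longrightarrow>
           is_t_design 2 (positions C) (H C w) \<and>
           is_t_design 2 (positions (dual_code C)) (H (dual_code C) w)"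
proof -
  define D where "D = dual_code C"
  define q where "q = CARD('a)"
  have q2: "q \<ge> 2" unfolding q_def by (rule q_ge2)
  have CS: "vec.subspace C" using assms(1) by (simp add: NMDS_def AMDS_def linear_code_def)
  have DS: "vec.subspace D" unfolding D_def by (rule subspace_dual)
  have nn: "CARD('n) = n" and dimC: "vec.dim C = k" and mdC: "min_dist C = n - k"
    using assms(2) by (auto simp: has_params_def)
  have k3: "k \<ge> 3" and nk3: "n - k \<ge> 3" using assms(3) by auto
  have cardC: "card C = q ^ k" using card_subspace[OF CS] dimC q_def by simp
  have dc: "card {x\<in>D. supp x \<subseteq> V} * q ^ k = q ^ card V * card {c\<in>C. supp c \<subseteq> - V}" for V
    using dual_count[OF CS, of V] cardC unfolding D_def q_def by simp
  have g0: "card {c\<in>C. supp c \<subseteq> {}} = 1"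
  proof -
    have "{c\<in>C. supp c \<subseteq> {}} = {0}" using CS by (auto simp: supp_empty_iff vec.subspace_0)
    thus ?thesis by simp
  qed
  have "card D * q ^ k = q ^ n" using dc[of UNIV] g0 nn by simp
  hence "q ^ n = q ^ k * card D" by (simp add: mult.commute)
  hence cardD: "card D = q ^ (n - k)" using pow_cancel[OF q2, of k n] nk3 by simp
  have dimD: "vec.dim D = n - k"
  proof -
    have "q ^ vec.dim D = q ^ (n - k)" using card_subspace[OF DS] cardD q_def by simp
    thus ?thesis using q2 by (simp add: power_inject_exp)
  qed
  have mdD: "min_dist D = k"
    using assms(1) nn dimD nk3 unfolding NMDS_def AMDS_def D_def by simp
  have gCs: "card {c\<in>C. supp c \<subseteq> W} = 1" if "card W < n - k" for W
    using g_small[OF CS] that mdC by simp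
  have gDs: "card {x\<in>D. supp x \<subseteq> W} = 1" if "card W < k" for W
    using g_small[OF DS] that mdD by simp
  have cW: "card (- W) = n - card W" for W :: "'n set" using nn by (simp add: card_Compl')
  have cWle: "card W \<le> n" for W :: "'n set" using nn card_mono[of UNIV W] by simp
  have gCl: "card {c\<in>C. supp c \<subseteq> W} = q ^ (card W - (n - k))" if W: "card W > n - k" for W
  proof -
    have "card {x\<in>D. supp x \<subseteq> -W} = 1" using gDs[of "-W"] W cW[of W] cWle[of W] by simp
    hence "q ^ k = q ^ (n - card W) * card {c\<in>C. supp c \<subseteq> W}" using dc[of "-W"] cW[of W] by simp
    hence "card {c\<in>C. supp c \<subseteq> W} = q ^ (k - (n - card W))" using pow_cancel[OF q2] W by simp
    moreover have "k - (n - card W) = card W - (n - k)" using W cWle[of W] nk3 by simp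
    ultimately show ?thesis by simp
  qed
  have gDl: "card {x\<in>D. supp x \<subseteq> W} = q ^ (card W - k)" if W: "card W > k" for W
  proof -
    have "card {c\<in>C. supp c \<subseteq> -W} = 1" using gCs[of "-W"] W cW[of W] cWle[of W] by simp
    hence "q ^ card W = q ^ k * card {x\<in>D. supp x \<subseteq> W}" using dc[of W] by (simp add: mult.commute)
    thus ?thesis using pow_cancel[OF q2] W by simp
  qed
  have ND: "card {x\<in>D. supp x = W} = card {c\<in>C. supp c = - W}" if W: "card W = k" for W
  proof -
    have "card {x\<in>D. supp x \<subseteq> W} * q ^ k = q ^ k * card {c\<in>C. supp c \<subseteq> -W}" using dc[of W] W by simp
    hence e: "card {x\<in>D. supp x \<subseteq> W} = card {c\<in>C. supp c \<subseteq> -W}" using q2 by simp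
    have "card {x\<in>D. supp x \<subseteq> W} = 1 + card {x\<in>D. supp x = W}" using g_crit[OF DS] W mdD k3 by simp
    moreover have "card {c\<in>C. supp c \<subseteq> -W} = 1 + card {c\<in>C. supp c = -W}"
      using g_crit[OF CS] W mdC nk3 cW[of W] by simp
    ultimately show ?thesis using e by simp
  qed
  define iC where "iC S = card {c\<in>C. hwt c = n - k \<and> S \<subseteq> supp c}" for S
  obtain lam where lam: "\<And>T. card T = 2 \<Longrightarrow> size (filter_mset (\<lambda>b. T \<subseteq> b) (H C (n - k))) = lam"
    using assms(4) unfolding is_t_design_def positions_def by auto
  have i2: "iC T = lam * (q - 1)" if "card T = 2" for T
    using H_size[OF CS, of "n - k" T] nk3 lam[OF that] unfolding iC_def q_def by simp
  have i1: "iC {x} * (n - k - 1) = (n - 1) * (lam * (q - 1))" for x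
  proof -
    have "iC {x} * (n - k - 1) = (\<Sum>y\<in>-{x}. iC {x,y})"
      unfolding iC_def by (rule double_count[symmetric])
    also have "\<dots> = (\<Sum>y\<in>-{x}. lam * (q - 1))" by (intro sum.cong refl i2) auto
    also have "\<dots> = (n - 1) * (lam * (q - 1))" using cW[of "{x}"] by simp
    finally show ?thesis .
  qed
  have iC_eq: "iC S = iC S'" if S: "card S = card S'" "card S \<le> 2" for S S'
  proof -
    consider "card S = 0" | "card S = 1" | "card S = 2" using S by linarith
    thus ?thesis
    proof cases
      case 1 thus ?thesis using S by simp
    next
      case 2
      obtain x where "S = {x}" using 2 by (auto simp: card_Suc_eq)
      moreover obtain x' where "S' = {x'}" using 2 S by (auto simp: card_Suc_eq)
      ultimately obtain x x' where "S = {x}" "S' = {x'}" by blast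
      moreover have "iC {x} * (n - k - 1) = iC {x'} * (n - k - 1)" using i1[of x] i1[of x'] by simp
      moreover have "n - k - 1 > 0" using nk3 by simp
      ultimately show ?thesis by simp
    next
      case 3 thus ?thesis using i2 S by simp
    qed
  qed
  define eC where "eC S = card {c\<in>C. hwt c = n - k \<and> supp c \<inter> S = {}}" for S
  have e1: "eC {x} + iC {x} = card {c\<in>C. hwt c = n - k}" for x
  proof -
    have "card {c\<in>{c\<in>C. hwt c = n - k}. x \<in> supp c} + card {c\<in>{c\<in>C. hwt c = n - k}. x \<notin> supp c} = card {c\<in>C. hwt c = n - k}"
      by (rule ie1) simp
    moreover have "{c\<in>{c\<in>C. hwt c = n - k}. x \<in> supp c} = {c\<in>C. hwt c = n - k \<and> {x} \<subseteq> supp c}" by auto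
    moreover have "{c\<in>{c\<in>C. hwt c = n - k}. x \<notin> supp c} = {c\<in>C. hwt c = n - k \<and> supp c \<inter> {x} = {}}" by auto
    ultimately show ?thesis unfolding eC_def iC_def by simp
  qed
  have e2: "iC {x,y} + eC {x} + eC {y} = card {c\<in>C. hwt c = n - k} + eC {x,y}" for x y
  proof -
    let ?M = "{c\<in>C. hwt c = n - k}"
    have "card {c\<in>?M. x \<in> supp c \<and> y \<in> supp c} + card {c\<in>?M. x \<notin> supp c} + card {c\<in>?M. y \<notin> supp c}
      = card ?M + card {c\<in>?M. x \<notin> supp c \<and> y \<notin> supp c}" by (rule ie2) simp
    moreover have "{c\<in>?M. x \<in> supp c \<and> y \<in> supp c} = {c\<in>C. hwt c = n - k \<and> {x,y} \<subseteq> supp c}" by auto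
    moreover have "{c\<in>?M. x \<notin> supp c} = {c\<in>C. hwt c = n - k \<and> supp c \<inter> {x} = {}}" by auto
    moreover have "{c\<in>?M. y \<notin> supp c} = {c\<in>C. hwt c = n - k \<and> supp c \<inter> {y} = {}}" by auto
    moreover have "{c\<in>?M. x \<notin> supp c \<and> y \<notin> supp c} = {c\<in>C. hwt c = n - k \<and> supp c \<inter> {x,y} = {}}" by auto
    ultimately show ?thesis unfolding eC_def iC_def by simp
  qed
  have eC1: "eC {x} = eC {x'}" for x x'
    using e1[of x] e1[of x'] iC_eq[of "{x}" "{x'}"] by simp
  have eC_eq: "eC S = eC S'" if S: "card S = card S'" "card S \<le> 2" for S S'
  proof -
    consider "card S = 0" | "card S = 1" | "card S = 2" using S by linarith
    thus ?thesis
    proof cases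
      case 1 thus ?thesis using S by simp
    next
      case 2
      obtain x where "S = {x}" using 2 by (auto simp: card_Suc_eq)
      moreover obtain x' where "S' = {x'}" using 2 S by (auto simp: card_Suc_eq)
      ultimately obtain x x' where "S = {x}" "S' = {x'}" by blast
      thus ?thesis using eC1[of x x'] by simp
    next
      case 3
      obtain x y where xy1: "S = {x,y}" "x \<noteq> y" using 3 by (auto simp: card_2_iff)
      obtain x' y' where xy2: "S' = {x',y'}" "x' \<noteq> y'" using 3 S by (auto simp: card_2_iff)
      note xy = xy1 xy2
      have "iC {x,y} = iC {x',y'}" using iC_eq[of "{x,y}" "{x',y'}"] S xy by simp
      thus ?thesis using e2[of x y] e2[of x' y'] eC1[of x x'] eC1[of y y'] xy by simp
    qed
  qed
  have ED: "card {x\<in>D. hwt x = k \<and> supp x \<inter> S = {}} = iC S" for S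
  proof -
    define F1 where "F1 = {W :: 'n set. card W = k \<and> W \<inter> S = {}}"
    define F2 where "F2 = {U :: 'n set. card U = n - k \<and> S \<subseteq> U}"
    have "card {x\<in>D. hwt x = k \<and> supp x \<inter> S = {}} = card {x\<in>D. supp x \<in> F1}"
      unfolding F1_def hwt_def by simp
    also have "\<dots> = (\<Sum>W\<in>F1. card {x\<in>D. supp x = W})" by (rule card_by_supp) auto
    also have "\<dots> = (\<Sum>W\<in>F1. card {c\<in>C. supp c = - W})"
      by (intro sum.cong refl ND) (simp add: F1_def)
    also have "\<dots> = (\<Sum>U\<in>uminus ` F1. card {c\<in>C. supp c = U})"
      by (subst sum.reindex) (auto intro: inj_onI)
    also have "uminus ` F1 = F2"
    proof
      show "uminus ` F1 \<subseteq> F2" unfolding F1_def F2_def using cW by auto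
      show "F2 \<subseteq> uminus ` F1"
      proof
        fix U assume U: "U \<in> F2"
        have "-U \<in> F1" using U cW[of U] nk3 unfolding F1_def F2_def by auto
        thus "U \<in> uminus ` F1" by (metis image_eqI double_compl)
      qed
    qed
    also have "(\<Sum>U\<in>F2. card {c\<in>C. supp c = U}) = card {c\<in>C. supp c \<in> F2}"
      by (rule card_by_supp[symmetric]) auto
    also have "\<dots> = iC S" unfolding iC_def F2_def hwt_def by (intro arg_cong[where f=card]) auto
    finally show ?thesis .
  qed
  have coreC: "card {c\<in>C. hwt c = w \<and> T \<subseteq> supp c} = card {c\<in>C. hwt c = w \<and> T' \<subseteq> supp c}"
    if "card T = 2" "card T' = 2" for w T T'
  proof (rule design_core[where d = "n - k" and G = "\<lambda>m. if m < n - k then 1 else q ^ (m - (n - k))"])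
    fix W :: "'n set" assume W: "card W \<noteq> n - k"
    show "card {c\<in>C. supp c \<subseteq> W} = (if card W < n - k then 1 else q ^ (card W - (n - k)))"
    proof (cases "card W < n - k")
      case True thus ?thesis using gCs[of W] by simp
    next
      case False hence "card W > n - k" using W by simp
      thus ?thesis using gCl[of W] False by simp
    qed
  next
    fix S S' :: "'n set" assume "card S = card S'" "card S \<le> 2"
    thus "card {c\<in>C. hwt c = n - k \<and> supp c \<inter> S = {}} = card {c\<in>C. hwt c = n - k \<and> supp c \<inter> S' = {}}"
      using eC_eq unfolding eC_def by blast
  qed (use that in simp_all)
  have coreD: "card {c\<in>D. hwt c = w \<and> T \<subseteq> supp c} = card {c\<in>D. hwt c = w \<and> T' \<subseteq> supp c}"
    if "card T = 2" "card T' = 2" for w T T'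
  proof (rule design_core[where d = k and G = "\<lambda>m. if m < k then 1 else q ^ (m - k)"])
    fix W :: "'n set" assume W: "card W \<noteq> k"
    show "card {c\<in>D. supp c \<subseteq> W} = (if card W < k then 1 else q ^ (card W - k))"
    proof (cases "card W < k")
      case True thus ?thesis using gDs[of W] by simp
    next
      case False hence "card W > k" using W by simp
      thus ?thesis using gDl[of W] False by simp
    qed
  next
    fix S S' :: "'n set" assume "card S = card S'" "card S \<le> 2"
    thus "card {c\<in>D. hwt c = k \<and> supp c \<inter> S = {}} = card {c\<in>D. hwt c = k \<and> supp c \<inter> S' = {}}"
      using iC_eq[of S S'] ED[of S] ED[of S'] by simp
  qed (use that in simp_all)
  show ?thesis
  proof (intro allI impI conjI)
    fix w assume w: "2 \<le> w \<and> w \<le> n"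
    have w0: "w > 0" using w by simp
    show "is_t_design 2 (positions C) (H C w)"
      by (rule design_from_counts[OF CS w0 coreC])
    show "is_t_design 2 (positions (dual_code C)) (H (dual_code C) w)"
      unfolding D_def[symmetric]
      by (rule design_from_counts[OF DS w0 coreD])
  qed
qed

end
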